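(* Let $\mathcal{C}>2$. For a probability vector $\boldsymbol\pi\in\mathbb{R}^k$, let $\tilde G^m(\boldsymbol\pi)=\sum_{i=1}^k\sqrt{\pi_i(\mathcal{C}-\pi_i)}$. Then $\tilde G^m$ is strongly concave with respect to the $\ell_2$-norm with modulus $\frac{2(\mathcal{C}-2)^2}{\mathcal{C}^3}$. Consequently, for any probability vectors $\boldsymbol\pi_0,\boldsymbol\pi_1\in\mathbb{R}^k$, any $\beta\in[0,1]$, and $\boldsymbol\pi=(1-\beta)\boldsymbol\pi_0+\beta\boldsymbol\pi_1$, \[ \tilde G^m(\boldsymbol\pi)-(1-\beta)\tilde G^m(\boldsymbol\pi_0)-\beta\tilde G^m(\boldsymbol\pi_1)\ \ge\ \frac{(\mathcal{C}-2)^2}{\mathcal{C}^3}\beta(1-\beta)\|\boldsymbol\pi_0-\boldsymbol\pi_1\|_2^2. \]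
   Context: A function $\Phi$ is strongly concave with respect to a norm $\|\cdot\|$ with modulus $\sigma>0$ if, for all $u,v$ in its domain and all $\theta\in[0,1]$, \[ \Phi(\theta u+(1-\theta)v)\ge\theta\Phi(u)+(1-\theta)\Phi(v)+\tfrac{\sigma}{2}\theta(1-\theta)\|u-v\|^2. \] *)

theory Defs
  imports "HOL-Analysis.Analysis"
begin

definition prob_simplex :: "(real ^ 'k) set" where
  "prob_simplex = {p. (\<forall>i. 0 \<le> p $ i) \<and> (\<Sum>i\<in>UNIV. p $ i) = 1}"

definition strongly_concave_on :: "('a::real_normed_vector) set \<Rightarrow> ('a \<Rightarrow> real) \<Rightarrow> real \<Rightarrow> bool" where
  "strongly_concave_on D \<Phi> \<sigma> \<longleftrightarrow>
     (\<forall>u\<in>D. \<forall>v\<in>D. \<forall>\<theta>::real. 0 \<le> \<theta> \<and> \<theta> \<le> 1 \<longrightarrow>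
        \<Phi> (\<theta> *\<^sub>R u + (1 - \<theta>) *\<^sub>R v) \<ge>
          \<theta> * \<Phi> u + (1 - \<theta>) * \<Phi> v + \<sigma> / 2 * \<theta> * (1 - \<theta>) * (norm (u - v))\<^sup>2)"

definition Gm :: "real \<Rightarrow> real ^ 'k \<Rightarrow> real" where
  "Gm C p = (\<Sum>i\<in>UNIV. sqrt (p $ i * (C - p $ i)))"

end

theory Submission
  imports Defs
begin

lemma scal:
  fixes C a b th :: real
  assumes C: "C > 0" and a: "0 \<le> a" "a \<le> C" and b: "0 \<le> b" "b \<le> C"
    and th: "0 \<le> th" "th \<le> 1"
  shows "sqrt ((th*a+(1-th)*b)*(C-(th*a+(1-th)*b))) \<ge>
     th * sqrt (a*(C-a)) + (1-th) * sqrt (b*(C-b)) + th*(1-th)*(a-b)^2/C"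
proof -
  define m where "m = th*a+(1-th)*b"
  define x where "x = sqrt (a*(C-a))"
  define y where "y = sqrt (b*(C-b))"
  define t where "t = th*(1-th)*(a-b)^2"
  define A where "A = th*x+(1-th)*y"
  define G where "G = sqrt (m*(C-m))"
  have qa: "a*(C-a) \<ge> 0" using a by simp
  have qb: "b*(C-b) \<ge> 0" using b by simp
  have x2: "x^2 = a*(C-a)" using qa x_def by simp
  have y2: "y^2 = b*(C-b)" using qb y_def by simp
  have x0: "x \<ge> 0" "y \<ge> 0" using x_def y_def qa qb by auto
  have A0: "A \<ge> 0" unfolding A_def using x0 th by (intro add_nonneg_nonneg mult_nonneg_nonneg) auto
  have t0: "t \<ge> 0" unfolding t_def using th by (intro mult_nonneg_nonneg) auto
  have qm: "m*(C-m) = th*x^2+(1-th)*y^2 + t"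
    unfolding m_def t_def x2 y2 by (simp add: algebra_simps power2_eq_square)
  have jen: "th*x^2+(1-th)*y^2 - A^2 = th*(1-th)*(x-y)^2"
    unfolding A_def by (simp add: algebra_simps power2_eq_square)
  have jen0: "th*(1-th)*(x-y)^2 \<ge> 0" using th by (intro mult_nonneg_nonneg) auto
  have qm0: "m*(C-m) \<ge> 0" using qm jen jen0 t0 zero_le_power2[of A] by linarith
  have G2: "G^2 = m*(C-m)" using qm0 G_def by simp
  have G0: "G \<ge> 0" using G_def qm0 by simp
  have GA2: "G^2 \<ge> A^2 + t" using G2 qm jen jen0 by linarith
  have "A^2 \<le> G^2" using GA2 t0 by linarith
  hence GA: "G \<ge> A" using G0 by (rule power2_le_imp_le)
  have GC: "2*G \<le> C"
  proof -
    have e: "(C/2)^2 - m*(C-m) = (C/2 - m)^2" by (simp add: power2_eq_square algebra_simps)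
    have "m*(C-m) \<le> (C/2)^2" using e zero_le_power2[of "C/2 - m"] by linarith
    hence "G^2 \<le> (C/2)^2" using G2 by simp
    hence "G \<le> C/2" by (rule power2_le_imp_le) (use C in simp)
    thus ?thesis by simp
  qed
  have "(G-A)*(G+A) = G^2 - A^2" by (simp add: power2_eq_square algebra_simps)
  hence "(G-A)*(G+A) \<ge> t" using GA2 by linarith
  moreover have "(G-A)*(G+A) \<le> (G-A)*C" using GA GC A0 by (intro mult_left_mono) auto
  ultimately have "(G-A)*C \<ge> t" by linarith
  hence "t/C \<le> G - A" using C by (simp add: divide_le_eq mult.commute)
  hence "A + t/C \<le> G" by linarith
  thus ?thesis unfolding G_def A_def m_def x_def y_def t_def .
qed

lemma simplex_le1:
  assumes "p \<in> (prob_simplex :: (real ^ 'k) set)"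
  shows "0 \<le> p $ i \<and> p $ i \<le> 1"
proof -
  have nn: "\<forall>j. 0 \<le> p $ j" and s: "(\<Sum>j\<in>UNIV. p $ j) = 1" using assms unfolding prob_simplex_def by auto
  have "p $ i \<le> (\<Sum>j\<in>UNIV. p $ j)"
    by (rule member_le_sum) (use nn in auto)
  thus ?thesis using nn s by auto
qed

lemma norm2: "(norm (x :: real ^ 'k))^2 = (\<Sum>i\<in>UNIV. (x $ i)^2)"
  unfolding norm_vec_def L2_set_def by (simp add: sum_nonneg)

lemma part1:
  fixes C :: real
  assumes "C > 2"
  shows "strongly_concave_on (prob_simplex :: (real ^ 'k) set) (Gm C) (2 * (C - 2)\<^sup>2 / C ^ 3)"
  unfolding strongly_concave_on_def
proof (intro ballI allI impI)
  fix u v :: "real ^ 'k" and th :: real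
  assume u: "u \<in> prob_simplex" and v: "v \<in> prob_simplex" and th: "0 \<le> th \<and> th \<le> 1"
  have C: "C > 0" using assms by simp
  have coef: "2 * (C - 2)\<^sup>2 / C ^ 3 / 2 \<le> 1 / C"
  proof -
    have "(C-2)^2 \<le> C^2" using assms by (simp add: power_mono)
    hence "(C-2)^2 / C^3 \<le> C^2/C^3" using C by (simp add: divide_right_mono)
    also have "C^2/C^3 = 1/C" using C by (simp add: power2_eq_square power3_eq_cube)
    finally show ?thesis by simp
  qed
  have tt: "th*(1-th) \<ge> 0" using th by simp
  have "2 * (C - 2)\<^sup>2 / C ^ 3 / 2 * th * (1 - th) * (norm (u - v))\<^sup>2
      \<le> 1/C * th * (1 - th) * (norm (u - v))\<^sup>2"
    using mult_right_mono[OF coef, of "th * (1 - th) * (norm (u - v))\<^sup>2"] tt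
    using mult_nonneg_nonneg[OF tt zero_le_power2[of "norm (u - v)"]]
    by (simp add: mult.assoc)
  also have "\<dots> = (\<Sum>i\<in>UNIV. th*(1-th)*(u$i - v$i)^2/C)"
    by (simp add: norm2 sum_distrib_left sum_divide_distrib)
  finally have L: "2 * (C - 2)\<^sup>2 / C ^ 3 / 2 * th * (1 - th) * (norm (u - v))\<^sup>2
      \<le> (\<Sum>i\<in>UNIV. th*(1-th)*(u$i - v$i)^2/C)" .
  have S: "(\<Sum>i\<in>UNIV. th * sqrt (u$i*(C-u$i)) + (1-th) * sqrt (v$i*(C-v$i)) + th*(1-th)*(u$i-v$i)^2/C)
     \<le> Gm C (th *\<^sub>R u + (1 - th) *\<^sub>R v)"
    unfolding Gm_def
  proof (rule sum_mono)
    fix i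
    show "th * sqrt (u$i*(C-u$i)) + (1-th) * sqrt (v$i*(C-v$i)) + th*(1-th)*(u$i-v$i)^2/C
        \<le> sqrt ((th *\<^sub>R u + (1 - th) *\<^sub>R v) $ i * (C - (th *\<^sub>R u + (1 - th) *\<^sub>R v) $ i))"
      using scal[OF C, of "u$i" "v$i" th] simplex_le1[OF u, of i] simplex_le1[OF v, of i] th assms
      by simp
  qed
  have "th * Gm C u + (1 - th) * Gm C v + 2 * (C - 2)\<^sup>2 / C ^ 3 / 2 * th * (1 - th) * (norm (u - v))\<^sup>2
     \<le> (\<Sum>i\<in>UNIV. th * sqrt (u$i*(C-u$i)) + (1-th) * sqrt (v$i*(C-v$i)) + th*(1-th)*(u$i-v$i)^2/C)"
    using L by (simp add: Gm_def sum.distrib sum_distrib_left)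
  thus "th * Gm C u + (1 - th) * Gm C v + 2 * (C - 2)\<^sup>2 / C ^ 3 / 2 * th * (1 - th) * (norm (u - v))\<^sup>2
     \<le> Gm C (th *\<^sub>R u + (1 - th) *\<^sub>R v)" using S by linarith
qed

theorem lemma12:
  fixes C :: real
  assumes "C > 2"
  shows "strongly_concave_on (prob_simplex :: (real ^ 'k) set) (Gm C) (2 * (C - 2)\<^sup>2 / C ^ 3)
    \<and> (\<forall>\<pi>0 \<in> (prob_simplex :: (real ^ 'k) set). \<forall>\<pi>1 \<in> prob_simplex. \<forall>\<beta>::real.
          0 \<le> \<beta> \<and> \<beta> \<le> 1 \<longrightarrow>
          Gm C ((1 - \<beta>) *\<^sub>R \<pi>0 + \<beta> *\<^sub>R \<pi>1) - (1 - \<beta>) * Gm C \<pi>0 - \<beta> * Gm C \<pi>1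
            \<ge> (C - 2)\<^sup>2 / C ^ 3 * \<beta> * (1 - \<beta>) * (norm (\<pi>0 - \<pi>1))\<^sup>2)"
proof
  have P: "strongly_concave_on (prob_simplex :: (real ^ 'k) set) (Gm C) (2 * (C - 2)\<^sup>2 / C ^ 3)"
    by (rule part1[OF assms])
  show "strongly_concave_on (prob_simplex :: (real ^ 'k) set) (Gm C) (2 * (C - 2)\<^sup>2 / C ^ 3)" by (rule P)
  show "\<forall>\<pi>0 \<in> (prob_simplex :: (real ^ 'k) set). \<forall>\<pi>1 \<in> prob_simplex. \<forall>\<beta>::real.
          0 \<le> \<beta> \<and> \<beta> \<le> 1 \<longrightarrow>
          Gm C ((1 - \<beta>) *\<^sub>R \<pi>0 + \<beta> *\<^sub>R \<pi>1) - (1 - \<beta>) * Gm C \<pi>0 - \<beta> * Gm C \<pi>1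
            \<ge> (C - 2)\<^sup>2 / C ^ 3 * \<beta> * (1 - \<beta>) * (norm (\<pi>0 - \<pi>1))\<^sup>2"
  proof (intro ballI allI impI)
    fix p0 p1 :: "real ^ 'k" and b :: real
    assume "p0 \<in> prob_simplex" "p1 \<in> prob_simplex" "0 \<le> b \<and> b \<le> 1"
    hence "Gm C ((1-b) *\<^sub>R p0 + (1 - (1-b)) *\<^sub>R p1) \<ge>
          (1-b) * Gm C p0 + (1 - (1-b)) * Gm C p1 + 2 * (C - 2)\<^sup>2 / C ^ 3 / 2 * (1-b) * (1 - (1-b)) * (norm (p0 - p1))\<^sup>2"
    proof -
      have "0 \<le> 1 - b \<and> 1 - b \<le> (1::real)" using \<open>0 \<le> b \<and> b \<le> 1\<close> by simp
      thus ?thesis using P \<open>p0 \<in> prob_simplex\<close> \<open>p1 \<in> prob_simplex\<close>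
        unfolding strongly_concave_on_def by blast
    qed
    thus "Gm C ((1 - b) *\<^sub>R p0 + b *\<^sub>R p1) - (1 - b) * Gm C p0 - b * Gm C p1
            \<ge> (C - 2)\<^sup>2 / C ^ 3 * b * (1 - b) * (norm (p0 - p1))\<^sup>2" by (simp add: algebra_simps)
  qed
qed

end
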